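(* Let $0<p<1$ be a constant. For positive integers $n,m$, let $G_{n,m}$ be the random bipartite graph on the vertex set $V_1\cup V_2$ with $V_1\cap V_2=\emptyset$, $|V_1|=n$, $|V_2|=m$, in which each pair $\{i,k\}$ with $i\in V_1$, $k\in V_2$ is an edge independently with probability $p$, and there are no other edges. Suppose $n\in\Theta(m)$, i.e. there are constants $a,b>0$ with $n\le a m$ and $m\le b n$ for all sufficiently large $n,m$. Then $\Pr(G_{n,m}\text{ is a UNN})\to 1$ as $n+m\to\infty$.
   Context: All graphs are finite, simple and undirected. For a vertex $v$ of a graph, $\mathrm{nb}(v)$ denotes the set of its neighbors; a vertex is not its own neighbor. A graph $G=(V,E)$ is a unique-neighborhood network (UNN) if distinct vertices have distinct neighborhoods, i.e. $\mathrm{nb}(u)\neq\mathrm{nb}(v)$ (equivalently $\mathrm{nb}(u)\triangle\mathrm{nb}(v)\neq\emptyset$) for all distinct $u,v\in V$. *)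

theory Defs
  imports "HOL-Analysis.Analysis"
begin

definition nb :: "'v set \<Rightarrow> ('v \<Rightarrow> 'v \<Rightarrow> bool) \<Rightarrow> 'v \<Rightarrow> 'v set" where
  "nb V adj v = {u \<in> V. adj v u}"

definition UNN :: "'v set \<Rightarrow> ('v \<Rightarrow> 'v \<Rightarrow> bool) \<Rightarrow> bool" where
  "UNN V adj \<longleftrightarrow> (\<forall>u\<in>V. \<forall>v\<in>V. u \<noteq> v \<longrightarrow> nb V adj u \<noteq> nb V adj v)"

text \<open>Bipartite graph on V1 = Inl ` {0..<n}, V2 = Inr ` {0..<m} determined by the
  set E \<subseteq> {0..<n} \<times> {0..<m} of pairs (i,k) that are edges {Inl i, Inr k}.\<close>
definition bip_vertices :: "nat \<Rightarrow> nat \<Rightarrow> (nat + nat) set" where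
  "bip_vertices n m = Inl ` {0..<n} \<union> Inr ` {0..<m}"

fun bip_adj :: "(nat \<times> nat) set \<Rightarrow> nat + nat \<Rightarrow> nat + nat \<Rightarrow> bool" where
  "bip_adj E (Inl i) (Inr k) = ((i, k) \<in> E)"
| "bip_adj E (Inr k) (Inl i) = ((i, k) \<in> E)"
| "bip_adj E _ _ = False"

definition prob_bip :: "real \<Rightarrow> nat \<Rightarrow> nat \<Rightarrow> ((nat \<times> nat) set \<Rightarrow> bool) \<Rightarrow> real" where
  "prob_bip p n m P =
     (\<Sum>E\<in>{E. E \<subseteq> {0..<n} \<times> {0..<m} \<and> P E}.
        p ^ card E * (1 - p) ^ (n * m - card E))"

end

theory Submission
  imports Defs
begin

definition w :: "real \<Rightarrow> 'a set \<Rightarrow> 'a set \<Rightarrow> real" where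
  "w p A E = (\<Prod>x\<in>A. if x \<in> E then p else 1 - p)"

lemma w_nonneg: "0 \<le> p \<Longrightarrow> p \<le> 1 \<Longrightarrow> 0 \<le> w p A E"
  unfolding w_def by (intro prod_nonneg) auto

lemma w_split:
  assumes "finite A" "E \<subseteq> A"
  shows "w p A E = p ^ card E * (1 - p) ^ (card A - card E)"
proof -
  have "w p A E = (\<Prod>x\<in>A - E. if x \<in> E then p else 1 - p) * (\<Prod>x\<in>E. if x \<in> E then p else 1 - p)"
    unfolding w_def by (rule prod.subset_diff[OF assms(2,1)])
  also have "\<dots> = (1-p) ^ card (A - E) * p ^ card E" by simp
  also have "card (A - E) = card A - card E" using assms by (simp add: card_Diff_subset finite_subset)
  finally show ?thesis by simp
qed

lemma w_total:
  assumes "finite A"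
  shows "(\<Sum>E\<in>Pow A. w p A E) = 1"
proof -
  have "(\<Prod>x\<in>A. p + (1 - p)) = (\<Sum>X\<in>Pow A. (\<Prod>x\<in>X. p) * (\<Prod>x\<in>A-X. 1 - p))"
    by (rule prod_add[OF assms])
  also have "\<dots> = (\<Sum>E\<in>Pow A. w p A E)"
  proof (rule sum.cong[OF refl])
    fix E assume "E \<in> Pow A"
    then show "(\<Prod>x\<in>E. p) * (\<Prod>x\<in>A-E. 1 - p) = w p A E"
      using assms by (simp add: w_split card_Diff_subset finite_subset)
  qed
  finally show ?thesis by simp
qed

lemma w_marg:
  assumes "finite S" "T \<subseteq> S"
  shows "(\<Sum>E\<in>{E\<in>Pow S. Q (E \<inter> T)}. w p S E) = (\<Sum>F\<in>{F\<in>Pow T. Q F}. w p T F)"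
proof -
  let ?A = "{F\<in>Pow T. Q F} \<times> Pow (S - T)"
  let ?h = "\<lambda>(F, G). F \<union> G"
  have bij: "bij_betw ?h ?A {E\<in>Pow S. Q (E \<inter> T)}"
  proof (rule bij_betw_byWitness[where f' = "\<lambda>E. (E \<inter> T, E - T)"])
    show "\<forall>a\<in>?A. (?h a \<inter> T, ?h a - T) = a" by auto
    show "\<forall>a'\<in>{E\<in>Pow S. Q (E \<inter> T)}. ?h (a' \<inter> T, a' - T) = a'" by auto
    show "?h ` ?A \<subseteq> {E\<in>Pow S. Q (E \<inter> T)}"
    proof
      fix x assume "x \<in> ?h ` ?A"
      then obtain F G where "F \<subseteq> T" "Q F" "G \<subseteq> S - T" "x = F \<union> G" by auto
      moreover then have "x \<inter> T = F" by auto
      ultimately show "x \<in> {E\<in>Pow S. Q (E \<inter> T)}" using assms by auto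
    qed
    show "(\<lambda>E. (E \<inter> T, E - T)) ` {E\<in>Pow S. Q (E \<inter> T)} \<subseteq> ?A" by auto
  qed
  have fT: "finite T" using assms finite_subset by blast
  have wsplit: "w p S (F \<union> G) = w p T F * w p (S - T) G" if "F \<subseteq> T" "G \<subseteq> S - T" for F G
  proof -
    have "w p S (F \<union> G) = (\<Prod>x\<in>S - T. if x \<in> F \<union> G then p else 1 - p) * (\<Prod>x\<in>T. if x \<in> F \<union> G then p else 1 - p)"
      unfolding w_def by (rule prod.subset_diff[OF assms(2,1)])
    also have "(\<Prod>x\<in>S - T. if x \<in> F \<union> G then p else 1 - p) = w p (S - T) G"
      unfolding w_def using that by (intro prod.cong) auto
    also have "(\<Prod>x\<in>T. if x \<in> F \<union> G then p else 1 - p) = w p T F"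
      unfolding w_def using that by (intro prod.cong) auto
    finally show ?thesis by simp
  qed
  have "(\<Sum>E\<in>{E\<in>Pow S. Q (E \<inter> T)}. w p S E) = (\<Sum>x\<in>?A. w p S (?h x))"
    using sum.reindex_bij_betw[OF bij, of "w p S"] by simp
  also have "\<dots> = (\<Sum>x\<in>?A. w p T (fst x) * w p (S - T) (snd x))"
    by (intro sum.cong) (auto simp: wsplit)
  also have "\<dots> = (\<Sum>F\<in>{F\<in>Pow T. Q F}. w p T F) * (\<Sum>G\<in>Pow (S - T). w p (S - T) G)"
    by (simp add: sum_product sum.cartesian_product case_prod_beta)
  also have "(\<Sum>G\<in>Pow (S - T). w p (S - T) G) = 1" using assms by (simp add: w_total)
  finally show ?thesis by simp
qed

lemma w_blocks:
  assumes "finite K" "\<And>k. k \<in> K \<Longrightarrow> finite (B k)"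
    and disj: "\<And>k l. k \<in> K \<Longrightarrow> l \<in> K \<Longrightarrow> k \<noteq> l \<Longrightarrow> B k \<inter> B l = {}"
  shows "(\<Sum>E\<in>{E\<in>Pow (\<Union>k\<in>K. B k). \<forall>k\<in>K. Q k (E \<inter> B k)}. w p (\<Union>k\<in>K. B k) E)
       = (\<Prod>k\<in>K. \<Sum>F\<in>{F\<in>Pow (B k). Q k F}. w p (B k) F)"
proof -
  let ?U = "\<Union>k\<in>K. B k"
  let ?P = "PiE K (\<lambda>k. {F\<in>Pow (B k). Q k F})"
  let ?L = "{E\<in>Pow ?U. \<forall>k\<in>K. Q k (E \<inter> B k)}"
  let ?h = "\<lambda>g. \<Union>k\<in>K. g k"
  have key: "(?h g) \<inter> B k = g k" if "g \<in> ?P" "k \<in> K" for g k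
  proof -
    have "g l \<inter> B k = {}" if "l \<in> K" "l \<noteq> k" for l
      using disj[OF \<open>l \<in> K\<close> \<open>k \<in> K\<close> \<open>l \<noteq> k\<close>] \<open>g \<in> ?P\<close> that by (auto simp: PiE_def Pi_def)
    moreover have "g k \<subseteq> B k" using \<open>g \<in> ?P\<close> \<open>k \<in> K\<close> by (auto simp: PiE_def Pi_def)
    ultimately show ?thesis using \<open>k \<in> K\<close> by blast
  qed
  have bij: "bij_betw ?h ?P ?L"
  proof (rule bij_betw_byWitness[where f' = "\<lambda>E. restrict (\<lambda>k. E \<inter> B k) K"])
    show "\<forall>a\<in>?P. restrict (\<lambda>k. ?h a \<inter> B k) K = a"
    proof
      fix g assume g: "g \<in> ?P"
      show "restrict (\<lambda>k. ?h g \<inter> B k) K = g"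
      proof
        fix k show "restrict (\<lambda>k. ?h g \<inter> B k) K k = g k"
          using g key[OF g] by (cases "k \<in> K") (auto simp: PiE_def extensional_def)
      qed
    qed
    show "\<forall>a'\<in>?L. ?h (restrict (\<lambda>k. a' \<inter> B k) K) = a'" by auto
    show "?h ` ?P \<subseteq> ?L"
    proof
      fix x assume "x \<in> ?h ` ?P"
      then obtain g where g: "g \<in> ?P" "x = ?h g" by auto
      have "x \<subseteq> ?U" using g by (auto simp: PiE_def Pi_def)
      moreover have "\<forall>k\<in>K. Q k (x \<inter> B k)" using g key[OF g(1)] by (auto simp: PiE_def Pi_def)
      ultimately show "x \<in> ?L" by auto
    qed
    show "(\<lambda>E. restrict (\<lambda>k. E \<inter> B k) K) ` ?L \<subseteq> ?P" by auto
  qed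
  have wh: "w p ?U (?h g) = (\<Prod>k\<in>K. w p (B k) (g k))" if g: "g \<in> ?P" for g
  proof -
    have "w p ?U (?h g) = (\<Prod>k\<in>K. \<Prod>x\<in>B k. if x \<in> ?h g then p else 1 - p)"
      unfolding w_def using assms by (subst prod.UNION_disjoint) auto
    also have "\<dots> = (\<Prod>k\<in>K. w p (B k) (g k))"
    proof (rule prod.cong[OF refl])
      fix k assume k: "k \<in> K"
      show "(\<Prod>x\<in>B k. if x \<in> ?h g then p else 1 - p) = w p (B k) (g k)"
        unfolding w_def
      proof (rule prod.cong[OF refl])
        fix x assume "x \<in> B k"
        then have "x \<in> ?h g \<longleftrightarrow> x \<in> g k" using key[OF g k] by blast
        then show "(if x \<in> ?h g then p else 1 - p) = (if x \<in> g k then p else 1 - p)" by simp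
      qed
    qed
    finally show ?thesis .
  qed
  have "(\<Sum>E\<in>?L. w p ?U E) = (\<Sum>g\<in>?P. w p ?U (?h g))"
    using sum.reindex_bij_betw[OF bij, of "w p ?U"] by simp
  also have "\<dots> = (\<Sum>g\<in>?P. \<Prod>k\<in>K. w p (B k) (g k))"
    by (intro sum.cong) (auto simp: wh)
  also have "\<dots> = (\<Prod>k\<in>K. \<Sum>F\<in>{F\<in>Pow (B k). Q k F}. w p (B k) F)"
    using assms by (subst prod_sum_PiE) auto
  finally show ?thesis .
qed

lemma w_events:
  assumes "finite S" "finite K" "\<And>k. k \<in> K \<Longrightarrow> B k \<subseteq> S"
    and disj: "\<And>k l. k \<in> K \<Longrightarrow> l \<in> K \<Longrightarrow> k \<noteq> l \<Longrightarrow> B k \<inter> B l = {}"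
  shows "(\<Sum>E\<in>{E\<in>Pow S. \<forall>k\<in>K. Q k (E \<inter> B k)}. w p S E)
       = (\<Prod>k\<in>K. \<Sum>F\<in>{F\<in>Pow (B k). Q k F}. w p (B k) F)"
proof -
  let ?T = "\<Union>k\<in>K. B k"
  have TS: "?T \<subseteq> S" using assms by auto
  have fB: "\<And>k. k \<in> K \<Longrightarrow> finite (B k)" using assms finite_subset by blast
  have "{E\<in>Pow S. \<forall>k\<in>K. Q k (E \<inter> B k)} = {E\<in>Pow S. (\<lambda>F. \<forall>k\<in>K. Q k (F \<inter> B k)) (E \<inter> ?T)}"
  proof -
    have "\<And>E k. k \<in> K \<Longrightarrow> E \<inter> ?T \<inter> B k = E \<inter> B k" by blast
    then show ?thesis by auto
  qed
  then have "(\<Sum>E\<in>{E\<in>Pow S. \<forall>k\<in>K. Q k (E \<inter> B k)}. w p S E)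
      = (\<Sum>F\<in>{F\<in>Pow ?T. \<forall>k\<in>K. Q k (F \<inter> B k)}. w p ?T F)"
    using w_marg[OF assms(1) TS, where Q="\<lambda>F. \<forall>k\<in>K. Q k (F \<inter> B k)" and p=p] by simp
  also have "\<dots> = (\<Prod>k\<in>K. \<Sum>F\<in>{F\<in>Pow (B k). Q k F}. w p (B k) F)"
    by (rule w_blocks[OF assms(2) fB disj])
  finally show ?thesis .
qed

lemma w_pair:
  assumes "a \<noteq> b"
  shows "(\<Sum>F\<in>{F\<in>Pow {a, b}. (a \<in> F \<longleftrightarrow> b \<in> F)}. w p {a, b} F) = p^2 + (1-p)^2"
proof -
  have "{F\<in>Pow {a, b}. (a \<in> F \<longleftrightarrow> b \<in> F)} = {{}, {a, b}}" by auto
  moreover have "w p {a,b} {} = (1-p)^2" using assms by (simp add: w_def power2_eq_square)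
  moreover have "w p {a,b} {a,b} = p^2" using assms by (simp add: w_def power2_eq_square)
  ultimately show ?thesis by simp
qed

lemma w_single:
  shows "(\<Sum>F\<in>{F\<in>Pow {a}. a \<notin> F}. w p {a} F) = 1 - p"
proof -
  have "{F\<in>Pow {a}. a \<notin> F} = {{}}" by auto
  then show ?thesis by (simp add: w_def)
qed

lemma union_bound:
  fixes f :: "'a \<Rightarrow> real"
  assumes "finite X" "finite I" "\<And>x. x \<in> X \<Longrightarrow> 0 \<le> f x"
    and "\<And>x. x \<in> X \<Longrightarrow> P x \<Longrightarrow> \<exists>i\<in>I. R i x"
  shows "sum f {x\<in>X. P x} \<le> (\<Sum>i\<in>I. sum f {x\<in>X. R i x})"
proof -
  have "sum f {x\<in>X. P x} \<le> (\<Sum>x\<in>{x\<in>X. P x}. \<Sum>i\<in>I. if R i x then f x else 0)"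
  proof (rule sum_mono)
    fix x assume x: "x \<in> {x\<in>X. P x}"
    then obtain i where i: "i \<in> I" "R i x" using assms(4) by blast
    have "f x = (if R i x then f x else 0)" using i by simp
    also have "\<dots> \<le> (\<Sum>i\<in>I. if R i x then f x else 0)"
      by (rule member_le_sum[OF i(1)]) (use x assms(3) assms(2) in auto)
    finally show "f x \<le> (\<Sum>i\<in>I. if R i x then f x else 0)" .
  qed
  also have "\<dots> \<le> (\<Sum>x\<in>X. \<Sum>i\<in>I. if R i x then f x else 0)"
    by (rule sum_mono2) (use assms in \<open>auto intro: sum_nonneg\<close>)
  also have "\<dots> = (\<Sum>i\<in>I. \<Sum>x\<in>X. if R i x then f x else 0)" by (rule sum.swap)
  also have "\<dots> = (\<Sum>i\<in>I. sum f {x\<in>X. R i x})"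
    using assms(1) by (simp add: sum.inter_filter)
  finally show ?thesis .
qed

lemma union_bound3:
  fixes f :: "'a \<Rightarrow> real"
  assumes "finite X" "\<And>x. x \<in> X \<Longrightarrow> 0 \<le> f x"
    and "\<And>x. x \<in> X \<Longrightarrow> P x \<Longrightarrow> P1 x \<or> P2 x \<or> P3 x"
  shows "sum f {x\<in>X. P x} \<le> sum f {x\<in>X. P1 x} + sum f {x\<in>X. P2 x} + sum f {x\<in>X. P3 x}"
proof -
  let ?R = "\<lambda>i::nat. if i = 0 then P1 else if i = 1 then P2 else P3"
  have "sum f {x\<in>X. P x} \<le> (\<Sum>i\<in>{0,1,2}. sum f {x\<in>X. ?R i x})"
    by (rule union_bound) (use assms in auto)
  then show ?thesis by simp
qed

lemma lim_aux:
  fixes r :: real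
  assumes "0 \<le> r" "r < 1"
  shows "(\<lambda>m. real m ^ 2 * r ^ m) \<longlonglongrightarrow> 0"
proof -
  have "norm (sqrt r) < 1" using assms by simp
  then have "(\<lambda>n. of_nat n * sqrt r ^ n) \<longlonglongrightarrow> 0" by (rule powser_times_n_limit_0)
  then have "(\<lambda>n. (of_nat n * sqrt r ^ n)^2) \<longlonglongrightarrow> 0^2" by (rule tendsto_power)
  moreover have "(of_nat n * sqrt r ^ n)^2 = real n ^ 2 * r ^ n" for n
  proof -
    have "(sqrt r ^ n)^2 = (sqrt r ^ 2) ^ n" by (simp flip: power_mult add: mult.commute)
    then show ?thesis using assms by (simp add: power_mult_distrib)
  qed
  ultimately show ?thesis by simp
qed

lemma nb_Inl: "nb (bip_vertices n m) (bip_adj E) (Inl i) = Inr ` {k. k < m \<and> (i, k) \<in> E}"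
  unfolding nb_def bip_vertices_def
proof (intro set_eqI iffI)
  fix u assume "u \<in> {u \<in> Inl ` {0..<n} \<union> Inr ` {0..<m}. bip_adj E (Inl i) u}"
  then show "u \<in> Inr ` {k. k < m \<and> (i, k) \<in> E}" by (cases u) auto
qed auto

lemma nb_Inr: "nb (bip_vertices n m) (bip_adj E) (Inr k) = Inl ` {i. i < n \<and> (i, k) \<in> E}"
  unfolding nb_def bip_vertices_def
proof (intro set_eqI iffI)
  fix u assume "u \<in> {u \<in> Inl ` {0..<n} \<union> Inr ` {0..<m}. bip_adj E (Inr k) u}"
  then show "u \<in> Inl ` {i. i < n \<and> (i, k) \<in> E}" by (cases u) auto
qed auto

lemma bad_cases:
  assumes "\<not> UNN (bip_vertices n m) (bip_adj E)"
  shows "(\<exists>ij\<in>{ij\<in>{..<n}\<times>{..<n}. fst ij \<noteq> snd ij}. \<forall>k\<in>{..<m}. ((fst ij, k) \<in> E \<longleftrightarrow> (snd ij, k) \<in> E))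
    \<or> (\<exists>kl\<in>{kl\<in>{..<m}\<times>{..<m}. fst kl \<noteq> snd kl}. \<forall>i\<in>{..<n}. ((i, fst kl) \<in> E \<longleftrightarrow> (i, snd kl) \<in> E))
    \<or> (\<exists>i\<in>{..<n}. \<forall>k\<in>{..<m}. (i, k) \<notin> E)"
proof -
  from assms obtain u v where uv: "u \<in> bip_vertices n m" "v \<in> bip_vertices n m" "u \<noteq> v"
    "nb (bip_vertices n m) (bip_adj E) u = nb (bip_vertices n m) (bip_adj E) v"
    unfolding UNN_def by blast
  show ?thesis
  proof (cases u)
    case (Inl i)
    show ?thesis
    proof (cases v)
      case (Inl j)
      have "i < n" "j < n" "i \<noteq> j" using uv \<open>u = Inl i\<close> Inl by (auto simp: bip_vertices_def)
      moreover have "\<forall>k\<in>{..<m}. ((i, k) \<in> E \<longleftrightarrow> (j, k) \<in> E)"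
      proof
        fix k assume "k \<in> {..<m}"
        have "(Inr k :: nat+nat) \<in> Inr ` {k. k < m \<and> (i, k) \<in> E} \<longleftrightarrow> (Inr k :: nat+nat) \<in> Inr ` {k. k < m \<and> (j, k) \<in> E}"
        proof -
          have eq: "(Inr ` {k. k < m \<and> (i, k) \<in> E} :: (nat+nat) set) = Inr ` {k. k < m \<and> (j, k) \<in> E}"
            using uv(4) unfolding \<open>u = Inl i\<close> Inl nb_Inl .
          show ?thesis by (simp only: eq)
        qed
        then show "(i, k) \<in> E \<longleftrightarrow> (j, k) \<in> E" using \<open>k \<in> {..<m}\<close> by auto
      qed
      ultimately show ?thesis by (intro disjI1 bexI[of _ "(i,j)"]) auto
    next
      case (Inr k)
      have "i < n" using uv \<open>u = Inl i\<close> by (auto simp: bip_vertices_def)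
      have e: "(Inr ` {k. k < m \<and> (i, k) \<in> E} :: (nat+nat) set) = Inl ` {j. j < n \<and> (j, k) \<in> E}"
        using uv(4) \<open>u = Inl i\<close> Inr by (simp add: nb_Inl nb_Inr)
      have "\<forall>k\<in>{..<m}. (i, k) \<notin> E"
      proof (intro ballI notI)
        fix k' assume "k' \<in> {..<m}" "(i, k') \<in> E"
        then have "(Inr k' :: nat+nat) \<in> Inr ` {k. k < m \<and> (i, k) \<in> E}" by auto
        then have "(Inr k' :: nat+nat) \<in> Inl ` {j. j < n \<and> (j, k) \<in> E}" by (simp only: e)
        then show False by auto
      qed
      then show ?thesis using \<open>i < n\<close> by blast
    qed
  next
    case (Inr k)
    show ?thesis
    proof (cases v)
      case (Inl i)
      have "i < n" using uv Inl by (auto simp: bip_vertices_def)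
      have e: "(Inr ` {k. k < m \<and> (i, k) \<in> E} :: (nat+nat) set) = Inl ` {j. j < n \<and> (j, k) \<in> E}"
        using uv(4) \<open>u = Inr k\<close> Inl by (simp add: nb_Inl nb_Inr)
      have "\<forall>k\<in>{..<m}. (i, k) \<notin> E"
      proof (intro ballI notI)
        fix k' assume "k' \<in> {..<m}" "(i, k') \<in> E"
        then have "(Inr k' :: nat+nat) \<in> Inr ` {k. k < m \<and> (i, k) \<in> E}" by auto
        then have "(Inr k' :: nat+nat) \<in> Inl ` {j. j < n \<and> (j, k) \<in> E}" by (simp only: e)
        then show False by auto
      qed
      then show ?thesis using \<open>i < n\<close> by blast
    next
      case (Inr l)
      have "k < m" "l < m" "k \<noteq> l" using uv \<open>u = Inr k\<close> Inr by (auto simp: bip_vertices_def)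
      moreover have "\<forall>i\<in>{..<n}. ((i, k) \<in> E \<longleftrightarrow> (i, l) \<in> E)"
      proof
        fix i assume "i \<in> {..<n}"
        have "(Inl i :: nat+nat) \<in> Inl ` {i. i < n \<and> (i, k) \<in> E} \<longleftrightarrow> (Inl i :: nat+nat) \<in> Inl ` {i. i < n \<and> (i, l) \<in> E}"
        proof -
          have eq: "(Inl ` {i. i < n \<and> (i, k) \<in> E} :: (nat+nat) set) = Inl ` {i. i < n \<and> (i, l) \<in> E}"
            using uv(4) unfolding \<open>u = Inr k\<close> Inr nb_Inr .
          show ?thesis by (simp only: eq)
        qed
        then show "(i, k) \<in> E \<longleftrightarrow> (i, l) \<in> E" using \<open>i \<in> {..<n}\<close> by auto
      qed
      ultimately show ?thesis by (intro disjI2 disjI1 bexI[of _ "(k,l)"]) auto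
    qed
  qed
qed

lemma prob_eq:
  "prob_bip p n m P = (\<Sum>E\<in>{E\<in>Pow ({..<n}\<times>{..<m}). P E}. w p ({..<n}\<times>{..<m}) E)"
proof -
  have "{E. E \<subseteq> {0..<n} \<times> {0..<m} \<and> P E} = {E\<in>Pow ({..<n}\<times>{..<m}). P E}" by auto
  moreover have "p ^ card E * (1 - p) ^ (n * m - card E) = w p ({..<n}\<times>{..<m}) E"
    if "E \<in> {E\<in>Pow ({..<n}\<times>{..<m}). P E}" for E
    using that by (subst w_split) (auto simp: card_cartesian_product)
  ultimately show ?thesis unfolding prob_bip_def by (intro sum.cong) auto
qed

lemma PrA:
  fixes n m :: nat
  assumes "i \<noteq> j" "i < n" "j < n"
  shows "(\<Sum>E\<in>{E\<in>Pow ({..<n}\<times>{..<m}). \<forall>k\<in>{..<m}. ((i, k) \<in> E \<longleftrightarrow> (j, k) \<in> E)}. w p ({..<n}\<times>{..<m}) E)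
    = (p^2 + (1-p)^2) ^ m"
proof -
  have h1: "{E\<in>Pow ({..<n}\<times>{..<m}). \<forall>k\<in>{..<m}. ((i, k) \<in> E \<longleftrightarrow> (j, k) \<in> E)}
      = {E\<in>Pow ({..<n}\<times>{..<m}). \<forall>k\<in>{..<m}. (\<lambda>k F. (i, k) \<in> F \<longleftrightarrow> (j, k) \<in> F) k (E \<inter> {(i,k),(j,k)})}"
    by simp
  have h2: "(\<Sum>E\<in>{E\<in>Pow ({..<n}\<times>{..<m}). \<forall>k\<in>{..<m}. (\<lambda>k F. (i, k) \<in> F \<longleftrightarrow> (j, k) \<in> F) k (E \<inter> {(i,k),(j,k)})}. w p ({..<n}\<times>{..<m}) E) = (\<Prod>k\<in>{..<m}. \<Sum>F\<in>{F\<in>Pow {(i,k),(j,k)}. (i, k) \<in> F \<longleftrightarrow> (j, k) \<in> F}. w p {(i,k),(j,k)} F)"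
    by (rule w_events) (use assms in auto)
  have h3: "(\<Prod>k\<in>{..<m}. \<Sum>F\<in>{F\<in>Pow {(i,k),(j,k)}. (i, k) \<in> F \<longleftrightarrow> (j, k) \<in> F}. w p {(i,k),(j,k)} F) = (\<Prod>k\<in>{..<m}. p^2 + (1-p)^2)"
    by (rule prod.cong[OF refl], rule w_pair) (use assms in simp)
  show ?thesis unfolding h1 h2 h3 by simp
qed
lemma PrB:
  fixes n m :: nat
  assumes "k \<noteq> l" "k < m" "l < m"
  shows "(\<Sum>E\<in>{E\<in>Pow ({..<n}\<times>{..<m}). \<forall>i\<in>{..<n}. ((i, k) \<in> E \<longleftrightarrow> (i, l) \<in> E)}. w p ({..<n}\<times>{..<m}) E)
    = (p^2 + (1-p)^2) ^ n"
proof -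
  have h1: "{E\<in>Pow ({..<n}\<times>{..<m}). \<forall>i\<in>{..<n}. ((i, k) \<in> E \<longleftrightarrow> (i, l) \<in> E)}
      = {E\<in>Pow ({..<n}\<times>{..<m}). \<forall>i\<in>{..<n}. (\<lambda>i F. (i, k) \<in> F \<longleftrightarrow> (i, l) \<in> F) i (E \<inter> {(i,k),(i,l)})}"
    by simp
  have h2: "(\<Sum>E\<in>{E\<in>Pow ({..<n}\<times>{..<m}). \<forall>i\<in>{..<n}. (\<lambda>i F. (i, k) \<in> F \<longleftrightarrow> (i, l) \<in> F) i (E \<inter> {(i,k),(i,l)})}. w p ({..<n}\<times>{..<m}) E) = (\<Prod>i\<in>{..<n}. \<Sum>F\<in>{F\<in>Pow {(i,k),(i,l)}. (i, k) \<in> F \<longleftrightarrow> (i, l) \<in> F}. w p {(i,k),(i,l)} F)"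
    by (rule w_events) (use assms in auto)
  have h3: "(\<Prod>i\<in>{..<n}. \<Sum>F\<in>{F\<in>Pow {(i,k),(i,l)}. (i, k) \<in> F \<longleftrightarrow> (i, l) \<in> F}. w p {(i,k),(i,l)} F) = (\<Prod>i\<in>{..<n}. p^2 + (1-p)^2)"
    by (rule prod.cong[OF refl], rule w_pair) (use assms in simp)
  show ?thesis unfolding h1 h2 h3 by simp
qed

lemma PrC:
  fixes n m :: nat
  assumes "i < n"
  shows "(\<Sum>E\<in>{E\<in>Pow ({..<n}\<times>{..<m}). \<forall>k\<in>{..<m}. (i, k) \<notin> E}. w p ({..<n}\<times>{..<m}) E)
    = (1-p) ^ m"
proof -
  have h1: "{E\<in>Pow ({..<n}\<times>{..<m}). \<forall>k\<in>{..<m}. (i, k) \<notin> E}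
      = {E\<in>Pow ({..<n}\<times>{..<m}). \<forall>k\<in>{..<m}. (\<lambda>k F. (i, k) \<notin> F) k (E \<inter> {(i,k)})}"
    by simp
  have h2: "(\<Sum>E\<in>{E\<in>Pow ({..<n}\<times>{..<m}). \<forall>k\<in>{..<m}. (\<lambda>k F. (i, k) \<notin> F) k (E \<inter> {(i,k)})}. w p ({..<n}\<times>{..<m}) E) = (\<Prod>k\<in>{..<m}. \<Sum>F\<in>{F\<in>Pow {(i,k)}. (i, k) \<notin> F}. w p {(i,k)} F)"
    by (rule w_events) (use assms in auto)
  have h3: "(\<Prod>k\<in>{..<m}. \<Sum>F\<in>{F\<in>Pow {(i,k)}. (i, k) \<notin> F}. w p {(i,k)} F) = (\<Prod>k\<in>{..<m}. 1 - p)"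
    by (rule prod.cong[OF refl], rule w_single)
  show ?thesis unfolding h1 h2 h3 by simp
qed

lemma sum_split_filter:
  fixes f :: "'a \<Rightarrow> real"
  assumes "finite X"
  shows "sum f {x\<in>X. P x} = sum f X - sum f {x\<in>X. \<not> P x}"
proof -
  have "sum f {x\<in>X. P x} + sum f {x\<in>X. \<not> P x} = (\<Sum>x\<in>X. (if P x then f x else 0) + (if \<not> P x then f x else 0))"
    using assms by (simp add: sum.inter_filter sum.distrib)
  also have "\<dots> = sum f X" by (intro sum.cong) auto
  finally show ?thesis by simp
qed

lemma bad_bound:
  fixes n m :: nat and p :: real
  assumes "0 \<le> p" "p \<le> 1"
  shows "prob_bip p n m (\<lambda>E. \<not> UNN (bip_vertices n m) (bip_adj E))
    \<le> real (n*n) * (p^2 + (1-p)^2)^m + real (m*m) * (p^2 + (1-p)^2)^n + real n * (1-p)^m"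
proof -
  let ?S = "{..<n}\<times>{..<m}"
  let ?X = "Pow ?S"
  let ?f = "w p ?S"
  let ?q = "p^2 + (1-p)^2"
  let ?IA = "{ij\<in>{..<n}\<times>{..<n}. fst ij \<noteq> snd ij}"
  let ?IB = "{kl\<in>{..<m}\<times>{..<m}. fst kl \<noteq> snd kl}"
  have finX: "finite ?X" by simp
  have fnn: "\<And>E. E \<in> ?X \<Longrightarrow> 0 \<le> ?f E" using assms by (simp add: w_nonneg)
  have "prob_bip p n m (\<lambda>E. \<not> UNN (bip_vertices n m) (bip_adj E))
      = sum ?f {E\<in>?X. \<not> UNN (bip_vertices n m) (bip_adj E)}" by (rule prob_eq)
  also have "\<dots> \<le> sum ?f {E\<in>?X. \<exists>ij\<in>?IA. \<forall>k\<in>{..<m}. ((fst ij, k) \<in> E \<longleftrightarrow> (snd ij, k) \<in> E)}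
     + sum ?f {E\<in>?X. \<exists>kl\<in>?IB. \<forall>i\<in>{..<n}. ((i, fst kl) \<in> E \<longleftrightarrow> (i, snd kl) \<in> E)}
     + sum ?f {E\<in>?X. \<exists>i\<in>{..<n}. \<forall>k\<in>{..<m}. (i, k) \<notin> E}"
    by (rule union_bound3[OF finX fnn bad_cases]) auto
  also have "sum ?f {E\<in>?X. \<exists>ij\<in>?IA. \<forall>k\<in>{..<m}. ((fst ij, k) \<in> E \<longleftrightarrow> (snd ij, k) \<in> E)}
      \<le> (\<Sum>ij\<in>?IA. sum ?f {E\<in>?X. \<forall>k\<in>{..<m}. ((fst ij, k) \<in> E \<longleftrightarrow> (snd ij, k) \<in> E)})"
    by (rule union_bound[OF finX _ fnn]) auto
  also have "\<dots> = (\<Sum>ij\<in>?IA. ?q ^ m)"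
    by (intro sum.cong refl PrA) auto
  also have "\<dots> \<le> real (n*n) * ?q ^ m"
  proof -
    have "card ?IA \<le> card ({..<n}\<times>{..<n})" by (intro card_mono) auto
    then have "card ?IA \<le> n * n" by (simp add: card_cartesian_product)
    then have c: "real (card ?IA) \<le> real (n * n)" by (simp only: of_nat_le_iff)
    have "0 \<le> ?q ^ m" by simp
    from mult_right_mono[OF c this] show ?thesis by simp
  qed
  also have "sum ?f {E\<in>?X. \<exists>kl\<in>?IB. \<forall>i\<in>{..<n}. ((i, fst kl) \<in> E \<longleftrightarrow> (i, snd kl) \<in> E)}
      \<le> (\<Sum>kl\<in>?IB. sum ?f {E\<in>?X. \<forall>i\<in>{..<n}. ((i, fst kl) \<in> E \<longleftrightarrow> (i, snd kl) \<in> E)})"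
    by (rule union_bound[OF finX _ fnn]) auto
  also have "\<dots> = (\<Sum>kl\<in>?IB. ?q ^ n)"
    by (intro sum.cong refl PrB) auto
  also have "\<dots> \<le> real (m*m) * ?q ^ n"
  proof -
    have "card ?IB \<le> card ({..<m}\<times>{..<m})" by (intro card_mono) auto
    then have "card ?IB \<le> m * m" by (simp add: card_cartesian_product)
    then have c: "real (card ?IB) \<le> real (m * m)" by (simp only: of_nat_le_iff)
    have "0 \<le> ?q ^ n" by simp
    from mult_right_mono[OF c this] show ?thesis by simp
  qed
  also have "sum ?f {E\<in>?X. \<exists>i\<in>{..<n}. \<forall>k\<in>{..<m}. (i, k) \<notin> E}
      \<le> (\<Sum>i\<in>{..<n}. sum ?f {E\<in>?X. \<forall>k\<in>{..<m}. (i, k) \<notin> E})"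
    by (rule union_bound[OF finX _ fnn]) auto
  also have "\<dots> = (\<Sum>i\<in>{..<n}. (1-p) ^ m)"
    by (intro sum.cong refl PrC) auto
  also have "\<dots> = real n * (1-p)^m" by simp
  finally show ?thesis by simp
qed


theorem mainTheorem1:
  fixes p a b :: real
  assumes "0 < p" and "p < 1" and "0 < a" and "0 < b"
  shows "\<forall>\<epsilon>>0. \<exists>N. \<forall>n m :: nat. 1 \<le> n \<longrightarrow> 1 \<le> m \<longrightarrow>
           real n \<le> a * real m \<longrightarrow> real m \<le> b * real n \<longrightarrow> N \<le> n + m \<longrightarrow>
           \<bar>prob_bip p n m (\<lambda>E. UNN (bip_vertices n m) (bip_adj E)) - 1\<bar> < \<epsilon>"
proof (intro allI impI)
  fix \<epsilon> :: real assume e: "\<epsilon> > 0"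
  define q where "q = p^2 + (1-p)^2"
  have pq: "p * (1 - p) > 0" using assms by simp
  have qeq: "q = 1 - 2 * (p * (1 - p))" unfolding q_def by (simp add: power2_eq_square algebra_simps)
  have q0: "0 \<le> q" unfolding q_def by simp
  have q1: "q < 1" using qeq pq by linarith
  have L1: "(\<lambda>m. a^2 * (real m ^ 2 * q ^ m)) \<longlonglongrightarrow> 0"
    using tendsto_mult[OF tendsto_const lim_aux[OF q0 q1], of "a^2"] by simp
  have L2: "(\<lambda>m. b^2 * (real m ^ 2 * q ^ m)) \<longlonglongrightarrow> 0"
    using tendsto_mult[OF tendsto_const lim_aux[OF q0 q1], of "b^2"] by simp
  have "norm (1 - p) < 1" using assms by simp
  then have L3: "(\<lambda>m. a * (real m * (1 - p) ^ m)) \<longlonglongrightarrow> 0"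
    using tendsto_mult[OF tendsto_const powser_times_n_limit_0, of "1-p" a] by simp
  have e3: "\<epsilon>/3 > 0" using e by simp
  obtain M1 where M1: "\<And>m. m \<ge> M1 \<Longrightarrow> norm (a^2 * (real m ^ 2 * q ^ m) - 0) < \<epsilon>/3"
    using LIMSEQ_D[OF L1 e3] by blast
  obtain M2 where M2: "\<And>m. m \<ge> M2 \<Longrightarrow> norm (b^2 * (real m ^ 2 * q ^ m) - 0) < \<epsilon>/3"
    using LIMSEQ_D[OF L2 e3] by blast
  obtain M3 where M3: "\<And>m. m \<ge> M3 \<Longrightarrow> norm (a * (real m * (1 - p) ^ m) - 0) < \<epsilon>/3"
    using LIMSEQ_D[OF L3 e3] by blast
  define M where "M = max (max M1 M2) M3"
  define N where "N = nat \<lceil>(a+1) * real M\<rceil> + nat \<lceil>(b+1) * real M\<rceil>"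
  show "\<exists>N. \<forall>n m :: nat. 1 \<le> n \<longrightarrow> 1 \<le> m \<longrightarrow>
           real n \<le> a * real m \<longrightarrow> real m \<le> b * real n \<longrightarrow> N \<le> n + m \<longrightarrow>
           \<bar>prob_bip p n m (\<lambda>E. UNN (bip_vertices n m) (bip_adj E)) - 1\<bar> < \<epsilon>"
  proof (intro exI[of _ N] allI impI)
    fix n m :: nat
    assume n1: "1 \<le> n" and m1: "1 \<le> m" and nm: "real n \<le> a * real m" and mn: "real m \<le> b * real n"
      and Nnm: "N \<le> n + m"
    have RN: "real N \<le> real n + real m" using Nnm by (metis of_nat_add of_nat_le_iff)
    have RN2: "real N = real (nat \<lceil>(a+1) * real M\<rceil>) + real (nat \<lceil>(b+1) * real M\<rceil>)"
      unfolding N_def by (rule of_nat_add)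
    have N1: "(a+1) * real M \<le> real N"
      using RN2 real_nat_ceiling_ge[of "(a+1) * real M"] of_nat_0_le_iff[of "nat \<lceil>(b+1) * real M\<rceil>"] by linarith
    have N2: "(b+1) * real M \<le> real N"
      using RN2 real_nat_ceiling_ge[of "(b+1) * real M"] of_nat_0_le_iff[of "nat \<lceil>(a+1) * real M\<rceil>"] by linarith
    have "(a+1) * real M \<le> (a+1) * real m" using N1 RN nm by (simp add: algebra_simps)
    then have "real M \<le> real m" using assms by simp
    then have mM: "M \<le> m" by simp
    have "(b+1) * real M \<le> (b+1) * real n" using N2 RN mn by (simp add: algebra_simps)
    then have "real M \<le> real n" using assms by simp
    then have nM: "M \<le> n" by simp
    have b1: "a^2 * (real m ^ 2 * q ^ m) < \<epsilon>/3" using M1[of m] mM unfolding M_def by simp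
    have b2: "b^2 * (real n ^ 2 * q ^ n) < \<epsilon>/3" using M2[of n] nM unfolding M_def by simp
    have b3: "a * (real m * (1 - p) ^ m) < \<epsilon>/3" using M3[of m] mM unfolding M_def by simp
    have i1: "real (n*n) * q^m \<le> a^2 * (real m ^ 2 * q ^ m)"
    proof -
      have "real n ^ 2 \<le> (a * real m) ^ 2" using nm by (intro power_mono) auto
      then have "real n ^ 2 * q^m \<le> (a * real m) ^ 2 * q^m" using q0 by (intro mult_right_mono) auto
      then show ?thesis by (simp add: power2_eq_square algebra_simps)
    qed
    have i2: "real (m*m) * q^n \<le> b^2 * (real n ^ 2 * q ^ n)"
    proof -
      have "real m ^ 2 \<le> (b * real n) ^ 2" using mn by (intro power_mono) auto
      then have "real m ^ 2 * q^n \<le> (b * real n) ^ 2 * q^n" using q0 by (intro mult_right_mono) auto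
      then show ?thesis by (simp add: power2_eq_square algebra_simps)
    qed
    have i3: "real n * (1-p)^m \<le> a * (real m * (1 - p) ^ m)"
    proof -
      have "real n * (1-p)^m \<le> (a * real m) * (1-p)^m" using nm assms by (intro mult_right_mono) auto
      then show ?thesis by (simp add: algebra_simps)
    qed
    have bad: "prob_bip p n m (\<lambda>E. \<not> UNN (bip_vertices n m) (bip_adj E)) < \<epsilon>"
      using bad_bound[of p n m] assms i1 i2 i3 b1 b2 b3 unfolding q_def by linarith
    let ?S = "{..<n}\<times>{..<m}"
    have tot: "(\<Sum>E\<in>Pow ?S. w p ?S E) = 1" by (rule w_total) simp
    have s1: "prob_bip p n m (\<lambda>E. UNN (bip_vertices n m) (bip_adj E))
        = sum (w p ?S) {E\<in>Pow ?S. UNN (bip_vertices n m) (bip_adj E)}" by (rule prob_eq)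
    have s2: "prob_bip p n m (\<lambda>E. \<not> UNN (bip_vertices n m) (bip_adj E))
        = sum (w p ?S) {E\<in>Pow ?S. \<not> UNN (bip_vertices n m) (bip_adj E)}" by (rule prob_eq)
    have s3: "sum (w p ?S) {E\<in>Pow ?S. UNN (bip_vertices n m) (bip_adj E)}
        = sum (w p ?S) (Pow ?S) - sum (w p ?S) {E\<in>Pow ?S. \<not> UNN (bip_vertices n m) (bip_adj E)}"
      by (rule sum_split_filter) simp
    have split: "prob_bip p n m (\<lambda>E. UNN (bip_vertices n m) (bip_adj E))
        = 1 - prob_bip p n m (\<lambda>E. \<not> UNN (bip_vertices n m) (bip_adj E))"
      using s1 s2 s3 tot by linarith
    have nn: "0 \<le> prob_bip p n m (\<lambda>E. \<not> UNN (bip_vertices n m) (bip_adj E))"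
      unfolding s2 using assms by (intro sum_nonneg w_nonneg) auto
    show "\<bar>prob_bip p n m (\<lambda>E. UNN (bip_vertices n m) (bip_adj E)) - 1\<bar> < \<epsilon>"
      using split nn bad by simp
  qed
qed

end
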